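(* In $\mathcal H_{P,R}$ and $\mathcal H_{Fr}$, for every $n\ge1$: $$\tilde\Delta(v_n)=\sum_{k=1}^{n-1}\sum_{l>0}\binom{2n-2k+l-2}{l}\Big(\sum_{\substack{a_1+\cdots+a_l=k\\ a_i>0}}v_{a_1}\cdots v_{a_l}\Big)\otimes v_{n-k},$$ $$\tilde\Delta_{Fr}(v_n)=\sum_{k=1}^{n-1}\sum_{l>0}\binom{n-k+l-2}{l}\Big(\sum_{\substack{a_1+\cdots+a_l=k\\ a_i>0}}v_{a_1}\cdots v_{a_l}\Big)\otimes v_{n-k},$$ $$\tilde\Delta(u_n)=\sum_{k=1}^{n-1}\sum_{l>0}\binom{2n-2k+l}{l}\Big(\sum_{\substack{a_1+\cdots+a_l=k\\ a_i>0}}v_{a_1}\cdots v_{a_l}\Big)\otimes u_{n-k},$$ $$\tilde\Delta_{Fr}(u_n)=\sum_{k=1}^{n-1}\sum_{l>0}\binom{n-k+l}{l}\Big(\sum_{\substack{a_1+\cdots+a_l=k\\ a_i>0}}v_{a_1}\cdots v_{a_l}\Big)\otimes u_{n-k}.$$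
   Context: Planar rooted trees are finite trees with a root, embedded in the plane, edges oriented away from the root (undecorated). $\mathcal H_{P,R}$ is the free associative unital $\mathbb Q$-algebra on planar rooted trees; its basis is the set of planar forests $t_1\cdots t_n$ ($1$ = empty forest), and the weight of a forest is its number of vertices. Its coproduct is $\Delta(F)=\sum_cP^c(F)\otimes R^c(F)$ over tuples $c=(c_i)$ where each $c_i$ is the empty cut of $t_i$ ($P=1,R=t_i$), the total cut ($P=t_i,R=1$), or an admissible cut of $t_i$ (a nonempty set of edges such that every oriented path meets at most one of them; $R^{c_i}(t_i)$ is the component of the root, $P^{c_i}(t_i)$ the left-to-right planar forest of the other components), $P^c(F)=\prod P^{c_i}(t_i)$, $R^c(F)=\prod R^{c_i}(t_i)$. $\mathcal H_{Fr}$ is the same algebra with coproduct $\Delta_{Fr}(F)=\sum_cP^c(F)\otimes R^c(F)$ where each $c_i$ is the empty cut, the total cut, or an admissible cut of $t_i$ containing no left edge (an edge is left if it is the leftmost among the edges with the same origin). For a coproduct $\delta$, $\tilde\delta(x)=\delta(x)-x\otimes1-1\otimes x$. For $n\ge1$, $u_n$ is the sum of all planar forests of weight $n$ and $v_n$ the sum of all planar rooted trees of weight $n$. *)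

theory Defs
  imports Complex_Main "HOL-Library.Function_Algebras"
begin

datatype ptree = Node "ptree list"

type_synonym forest = "ptree list"

fun tw :: "ptree \<Rightarrow> nat" where
  "tw (Node ts) = Suc (sum_list (map tw ts))"

definition fw :: "forest \<Rightarrow> nat" where
  "fw F = sum_list (map tw F)"

text \<open>cuts fr t lists, with multiplicity, the pairs (P, R) over the empty cut and all
admissible cuts of t (the component of the root is R, the other components form the
left-to-right forest P). If fr is True, left edges (edge to the first child) may not be
cut (the Foissy-type coproduct of H_Fr).\<close>

fun cuts :: "bool \<Rightarrow> ptree \<Rightarrow> (forest \<times> ptree) list" where
  "cuts fr (Node ts) =
     map (\<lambda>cs. (concat (map fst cs), Node (concat (map snd cs))))
       (product_lists
         (case ts of [] \<Rightarrow> []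
          | s # ss \<Rightarrow>
             ((if fr then [] else [([s], [])]) @ map (\<lambda>pr. (fst pr, [snd pr])) (cuts fr s))
             # map (\<lambda>s'. [([s'], [])] @ map (\<lambda>pr. (fst pr, [snd pr])) (cuts fr s')) ss))"

text \<open>Coproduct of a tree: total cut, plus empty and admissible cuts.\<close>
definition tcop :: "bool \<Rightarrow> ptree \<Rightarrow> (forest \<times> forest) list" where
  "tcop fr t = ([t], []) # map (\<lambda>pr. (fst pr, [snd pr])) (cuts fr t)"

definition fcop :: "bool \<Rightarrow> forest \<Rightarrow> (forest \<times> forest) list" where
  "fcop fr F = map (\<lambda>cs. (concat (map fst cs), concat (map snd cs)))
                   (product_lists (map (tcop fr) F))"

type_synonym H = "forest \<Rightarrow> rat"
type_synonym HH = "forest \<times> forest \<Rightarrow> rat"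

definition basis :: "forest \<Rightarrow> H" where
  "basis F = (\<lambda>G. if G = F then 1 else 0)"

definition hmult :: "H \<Rightarrow> H \<Rightarrow> H" where
  "hmult x y = (\<lambda>F. \<Sum>i\<le>length F. x (take i F) * y (drop i F))"

definition hprod :: "H list \<Rightarrow> H" where
  "hprod xs = foldr hmult xs (basis [])"

definition tens :: "H \<Rightarrow> H \<Rightarrow> HH" where
  "tens x y = (\<lambda>(a, b). x a * y b)"

definition smult :: "rat \<Rightarrow> HH \<Rightarrow> HH" where
  "smult c z = (\<lambda>p. c * z p)"

text \<open>Linear extension of the coproduct (fr = False: H_PR, fr = True: H_Fr);
elements are assumed finitely supported.\<close>
definition cop :: "bool \<Rightarrow> H \<Rightarrow> HH" where
  "cop fr x = (\<lambda>p. \<Sum>F\<in>{F. x F \<noteq> 0}. x F * of_nat (count_list (fcop fr F) p))"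

definition rcop :: "bool \<Rightarrow> H \<Rightarrow> HH" where
  "rcop fr x = cop fr x - tens x (basis []) - tens (basis []) x"

definition vv :: "nat \<Rightarrow> H" where
  "vv n = (\<lambda>F. if (\<exists>t. F = [t] \<and> tw t = n) then 1 else 0)"

definition uu :: "nat \<Rightarrow> H" where
  "uu n = (\<lambda>F. if fw F = n then 1 else 0)"

definition compsum :: "nat \<Rightarrow> nat \<Rightarrow> H" where
  "compsum k l = (\<Sum>as\<in>{as. length as = l \<and> sum_list as = k \<and> (\<forall>a\<in>set as. 0 < a)}.
                     hprod (map vv as))"

end

theory Submission
  imports Defs "HOL-Computational_Algebra.Formal_Power_Series"
begin
lemma tw_gt0: "0 < tw t"
  by (cases t) auto

lemma tw_pos: "tw t \<ge> 1"
  using tw_gt0 by (simp add: Suc_le_eq)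

lemma fw_Nil[simp]: "fw [] = 0" and fw_Cons[simp]: "fw (s # ss) = tw s + fw ss"
  by (auto simp: fw_def)

lemma fw_append[simp]: "fw (xs @ ys) = fw xs + fw ys"
  by (auto simp: fw_def)

lemma fw_eq0[simp]: "fw xs = 0 \<longleftrightarrow> xs = []"
  using tw_gt0 by (cases xs) auto

lemma length_le_fw: "length xs \<le> fw xs"
proof (induction xs)
  case (Cons a xs) then show ?case using tw_pos[of a] by simp
qed simp

definition TW :: "nat \<Rightarrow> ptree set" where "TW n = {t. tw t = n}"
definition FW :: "nat \<Rightarrow> forest set" where "FW n = {ts. fw ts = n}"

lemma TW_0: "TW 0 = {}"
  using tw_gt0 by (force simp: TW_def)

lemma TW_Suc: "TW (Suc m) = Node ` FW m"
proof -
  have "t \<in> Node ` FW m" if "tw t = Suc m" for t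
    using that by (cases t) (auto simp: FW_def fw_def)
  then show ?thesis by (auto simp: TW_def FW_def fw_def)
qed

lemma FW_0: "FW 0 = {[]}"
  by (auto simp: FW_def)

lemma FW_pos: "n > 0 \<Longrightarrow> FW n = (\<Union>a\<in>{1..n}. (\<lambda>(s,ss). s # ss) ` (TW a \<times> FW (n - a)))"
proof (intro equalityI subsetI)
  fix x assume "n > 0" "x \<in> FW n"
  then obtain s ss where x: "x = s # ss" by (cases x) (auto simp: FW_def)
  with \<open>x \<in> FW n\<close> tw_pos[of s] show "x \<in> (\<Union>a\<in>{1..n}. (\<lambda>(s,ss). s # ss) ` (TW a \<times> FW (n - a)))"
    by (auto simp: FW_def TW_def intro!: bexI[of _ "tw s"])
next
  fix x assume "x \<in> (\<Union>a\<in>{1..n}. (\<lambda>(s,ss). s # ss) ` (TW a \<times> FW (n - a)))"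
  then show "x \<in> FW n" by (auto simp: FW_def TW_def)
qed

lemma finite_FW: "finite (FW n)"
proof (induction n rule: less_induct)
  case (less n)
  show ?case
  proof (cases "n = 0")
    case True then show ?thesis by (simp add: FW_0)
  next
    case False
    have "finite (TW a)" if "a \<in> {1..n}" for a
    proof -
      define m where "m = a - 1"
      have "a = Suc m" "m < n" using that by (auto simp: m_def)
      then show ?thesis using less by (simp add: TW_Suc)
    qed
    moreover have "finite (FW (n - a))" if "a \<in> {1..n}" for a
      using that less False by auto
    ultimately show ?thesis using False by (simp add: FW_pos)
  qed
qed

lemma finite_TW: "finite (TW n)"
  by (cases n) (auto simp: TW_0 TW_Suc finite_FW)

lemma sum_FW_pos:
  assumes "n > 0"
  shows "sum f (FW n) = (\<Sum>a\<in>{1..n}. \<Sum>s\<in>TW a. \<Sum>ss\<in>FW (n - a). f (s # ss))"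
proof -
  have "sum f (FW n) = (\<Sum>a\<in>{1..n}. sum f ((\<lambda>(s,ss). s # ss) ` (TW a \<times> FW (n - a))))"
    unfolding FW_pos[OF assms]
    apply (rule sum.UNION_disjoint)
      apply (simp_all add: finite_TW finite_FW)
    apply (auto simp: TW_def)
    done
  also have "\<dots> = (\<Sum>a\<in>{1..n}. sum (\<lambda>(s,ss). f (s # ss)) (TW a \<times> FW (n - a)))"
    by (rule sum.cong[OF refl], subst sum.reindex) (auto simp: inj_on_def split_def)
  also have "\<dots> = (\<Sum>a\<in>{1..n}. \<Sum>s\<in>TW a. \<Sum>ss\<in>FW (n - a). f (s # ss))"
    by (rule sum.cong[OF refl]) (simp add: sum.cartesian_product)
  finally show ?thesis .
qed


definition gcat :: "('a list \<times> 'b list) list \<Rightarrow> 'a list \<times> 'b list" where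
  "gcat cs = (concat (map fst cs), concat (map snd cs))"

definition mj :: "('a list \<times> 'b list) multiset \<Rightarrow> ('a list \<times> 'b list) multiset \<Rightarrow> ('a list \<times> 'b list) multiset" where
  "mj M N = (\<Sum>x\<in>#M. image_mset (\<lambda>y. (fst x @ fst y, snd x @ snd y)) N)"

lemma gcat_Nil[simp]: "gcat [] = ([], [])" and gcat_Cons[simp]: "gcat (x # l) = (fst x @ fst (gcat l), snd x @ snd (gcat l))"
  by (auto simp: gcat_def)

lemma mj_empty[simp]: "mj {#} N = {#}" "mj M {#} = {#}"
  by (auto simp: mj_def)

lemma mj_add_left[simp]: "mj (M + M') N = mj M N + mj M' N"
  by (simp add: mj_def)

lemma mj_add_right[simp]: "mj M (N + N') = mj M N + mj M N'"
  by (simp add: mj_def sum_mset.distrib)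

lemma mj_sum_left: "mj (\<Sum>i\<in>I. M i) N = (\<Sum>i\<in>I. mj (M i) N)"
  by (induction I rule: infinite_finite_induct) auto

lemma mj_sum_right: "mj M (\<Sum>i\<in>I. N i) = (\<Sum>i\<in>I. mj M (N i))"
  by (induction I rule: infinite_finite_induct) auto

lemma mset_pl_Cons:
  "mset (map gcat (product_lists (ys # yss))) = mj (mset ys) (mset (map gcat (product_lists yss)))"
proof (induction ys)
  case Nil then show ?case by simp
next
  case (Cons x ys)
  have "mset (map gcat (product_lists ((x # ys) # yss))) =
        mset (map (\<lambda>l. gcat (x # l)) (product_lists yss)) + mset (map gcat (product_lists (ys # yss)))"
    by (simp del: gcat_Cons add: comp_def)
  also have "mset (map (\<lambda>l. gcat (x # l)) (product_lists yss)) =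
       image_mset (\<lambda>y. (fst x @ fst y, snd x @ snd y)) (mset (map gcat (product_lists yss)))"
    by (simp add: multiset.map_comp comp_def)
  finally show ?case using Cons by (simp add: mj_def)
qed

lemma cnt_img:
  "count (image_mset (\<lambda>y. (a @ fst y, b @ snd y)) N) (P, R) =
    (if take (length a) P = a \<and> take (length b) R = b then count N (drop (length a) P, drop (length b) R) else 0)"
proof (induction N)
  case empty then show ?case by simp
next
  case (add y N)
  have "((a @ fst y, b @ snd y) = (P, R)) \<longleftrightarrow>
     (take (length a) P = a \<and> take (length b) R = b \<and> y = (drop (length a) P, drop (length b) R))"
    by (cases y) (auto simp: append_eq_conv_conj)
  then show ?case using add by auto
qed

lemma cnt_mj1:
  "count (mj (image_mset (\<lambda>s. ([s], [])) S) N) (P, R) =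
     (case P of [] \<Rightarrow> 0 | p # P' \<Rightarrow> count S p * count N (P', R))"
proof (induction S)
  case empty then show ?case by (simp split: list.split)
next
  case (add s S)
  have "mj (image_mset (\<lambda>s. ([s], [])) (add_mset s S)) N =
     image_mset (\<lambda>y. ([s] @ fst y, [] @ snd y)) N + mj (image_mset (\<lambda>s. ([s], [])) S) N"
    by (simp add: mj_def)
  moreover have "count (image_mset (\<lambda>y. ([s] @ fst y, [] @ snd y)) N) (P, R) =
     (case P of [] \<Rightarrow> 0 | p # P' \<Rightarrow> if p = s then count N (P', R) else 0)"
    unfolding cnt_img by (auto split: list.split)
  ultimately show ?case using add by (auto split: list.split)
qed

lemma sum_single_idx:
  assumes "finite A"
  shows "(\<Sum>i\<in>A. if i = k then f i else 0) = (if k \<in> A then f k else 0)"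
  using assms by (simp add: sum.delta)

lemma cnt_mj2:
  "count (mj (image_mset (\<lambda>pr. (fst pr, [snd pr])) A) N) (P, R) =
     (case R of [] \<Rightarrow> 0 | r # R' \<Rightarrow> \<Sum>i\<le>length P. count A (take i P, r) * count N (drop i P, R'))"
proof (induction A)
  case empty then show ?case by (simp split: list.split)
next
  case (add x A)
  obtain p r0 where x: "x = (p, r0)" by (cases x)
  have "mj (image_mset (\<lambda>pr. (fst pr, [snd pr])) (add_mset x A)) N =
     image_mset (\<lambda>y. (p @ fst y, [r0] @ snd y)) N + mj (image_mset (\<lambda>pr. (fst pr, [snd pr])) A) N"
    by (simp add: mj_def x)
  moreover
  have "(\<Sum>i\<le>length P. count (add_mset x A) (take i P, r) * count N (drop i P, R')) =
        (if take (length p) P = p \<and> r = r0 then count N (drop (length p) P, R') else 0) +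
        (\<Sum>i\<le>length P. count A (take i P, r) * count N (drop i P, R'))" for r R'
  proof -
    have "(\<Sum>i\<le>length P. count (add_mset x A) (take i P, r) * count N (drop i P, R')) =
          (\<Sum>i\<le>length P. (if i = length p then (if take (length p) P = p \<and> r = r0 then count N (drop i P, R') else 0) else 0)) +
          (\<Sum>i\<le>length P. count A (take i P, r) * count N (drop i P, R'))"
      unfolding sum.distrib[symmetric]
    proof (rule sum.cong[OF refl])
      fix i assume i: "i \<in> {..length P}"
      have "((take i P, r) = x) \<longleftrightarrow> (i = length p \<and> take (length p) P = p \<and> r = r0)"
        using i by (auto simp: x)
      then show "count (add_mset x A) (take i P, r) * count N (drop i P, R') =
         (if i = length p then if take (length p) P = p \<and> r = r0 then count N (drop i P, R') else 0 else 0) +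
         count A (take i P, r) * count N (drop i P, R')"
        by (auto simp: algebra_simps)
    qed
    also have "(\<Sum>i\<le>length P. (if i = length p then (if take (length p) P = p \<and> r = r0 then count N (drop i P, R') else 0) else 0)) =
       (if take (length p) P = p \<and> r = r0 then count N (drop (length p) P, R') else 0)"
      by (subst sum.delta) (auto dest: sym[of p] intro: ccontr)
    finally show ?thesis .
  qed
  moreover have "count (image_mset (\<lambda>y. (p @ fst y, [r0] @ snd y)) N) (P, R) =
     (case R of [] \<Rightarrow> 0 | r # R' \<Rightarrow> if take (length p) P = p \<and> r = r0 then count N (drop (length p) P, R') else 0)"
    unfolding cnt_img by (auto split: list.split)
  ultimately show ?case using add by (auto split: list.split)
qed

definition mc :: "nat \<Rightarrow> nat \<Rightarrow> nat" where "mc a l = (a + l - 1) choose l"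

lemma mc_0[simp]: "mc a 0 = 1" by (simp add: mc_def)

lemma mc_gchoose: "(of_nat (mc a i) :: rat) = (of_nat a + of_nat i - 1) gchoose i"
proof (cases "a + i = 0")
  case True then show ?thesis by (simp add: mc_def)
next
  case False
  then have "(of_nat (a + i - 1) :: rat) = of_nat a + of_nat i - 1" by (subst of_nat_diff) auto
  then show ?thesis by (simp add: mc_def binomial_gbinomial)
qed

lemma mc_neg: "(of_nat (mc a i) :: rat) = (-1)^i * ((- of_nat a) gchoose i)"
proof -
  have "((- of_nat a :: rat) gchoose i) = (-1)^i * ((of_nat a + of_nat i - 1) gchoose i)"
    by (subst gbinomial_negated_upper) (simp add: algebra_simps)
  then have "(-1)^i * ((- of_nat a :: rat) gchoose i) = ((-1)^i * (-1)^i) * ((of_nat a + of_nat i - 1) gchoose i)"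
    by simp
  also have "(-1 :: rat)^i * (-1)^i = 1" by (simp flip: power_add)
  finally show ?thesis by (simp add: mc_gchoose)
qed

lemma mc_vandermonde: "(\<Sum>i\<le>l. mc a i * mc b (l - i)) = mc (a + b) l"
proof -
  have "(of_nat (\<Sum>i\<le>l. mc a i * mc b (l - i)) :: rat) =
        (\<Sum>i\<le>l. (-1)^l * (((- of_nat a) gchoose i) * ((- of_nat b) gchoose (l - i))))"
    unfolding of_nat_sum of_nat_mult mc_neg
  proof (rule sum.cong[OF refl])
    fix i assume "i \<in> {..l}"
    then have h: "(-1 :: rat)^l = (-1)^i * (-1)^(l-i)" by (simp flip: power_add)
    show "(-1) ^ i * (- of_nat a gchoose i) * ((-1) ^ (l - i) * (- of_nat b gchoose (l - i))) =
         (-1)^l * ((- of_nat a gchoose i) * (- of_nat b gchoose (l - i)) :: rat)"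
      unfolding h by (simp only: ac_simps)
  qed
  also have "\<dots> = (-1)^l * (\<Sum>i\<in>{0..l}. ((- of_nat a) gchoose i) * ((- of_nat b) gchoose (l - i)))"
    by (simp add: sum_distrib_left atMost_atLeast0)
  also have "\<dots> = (-1)^l * ((- of_nat a + - of_nat b) gchoose l)"
    by (simp only: gbinomial_Vandermonde)
  also have "\<dots> = of_nat (mc (a + b) l)"
    by (simp add: mc_neg)
  finally show ?thesis by (simp only: of_nat_eq_iff)
qed

lemma mc_pascal: "a \<ge> 1 \<Longrightarrow> l \<ge> 1 \<Longrightarrow> mc (a - 1) l + mc a (l - 1) = mc a l"
proof -
  assume "a \<ge> 1" "l \<ge> 1"
  then obtain b k where "a = Suc b" "l = Suc k" by (metis Suc_le_D One_nat_def)
  then show ?thesis by (simp add: mc_def)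
qed

definition opts :: "bool \<Rightarrow> bool \<Rightarrow> ptree \<Rightarrow> (forest \<times> forest) list" where
  "opts fr first s = (if fr \<and> first then [] else [([s], [])]) @ map (\<lambda>pr. (fst pr, [snd pr])) (cuts fr s)"

fun optlist :: "bool \<Rightarrow> bool \<Rightarrow> forest \<Rightarrow> (forest \<times> forest) list list" where
  "optlist fr first [] = []"
| "optlist fr first (s # ss) = opts fr first s # map (opts fr False) ss"

lemma optlist_False: "optlist fr False ts = map (opts fr False) ts"
  by (cases ts) auto

lemma opts_False: "opts fr False = (\<lambda>s'. [([s'], [])] @ map (\<lambda>pr. (fst pr, [snd pr])) (cuts fr s'))"
  by (rule ext) (simp add: opts_def)

lemma cuts_eq: "cuts fr (Node ts) = map (apsnd Node \<circ> gcat) (product_lists (optlist fr True ts))"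
proof -
  have e: "(\<lambda>cs. (concat (map fst cs), Node (concat (map snd cs)))) = apsnd Node \<circ> gcat"
    by (rule ext) (simp add: gcat_def)
  show ?thesis
    unfolding cuts.simps e
    by (cases ts) (simp_all only: optlist.simps opts_False list.case, simp add: opts_def)
qed

definition AT :: "bool \<Rightarrow> nat \<Rightarrow> (forest \<times> ptree) multiset" where
  "AT fr n = (\<Sum>t\<in>TW n. mset (cuts fr t))"

definition CF :: "bool \<Rightarrow> bool \<Rightarrow> nat \<Rightarrow> (forest \<times> forest) multiset" where
  "CF fr first n = (\<Sum>ts\<in>FW n. mset (map gcat (product_lists (optlist fr first ts))))"

lemma image_mset_sum: "image_mset f (\<Sum>i\<in>I. M i) = (\<Sum>i\<in>I. image_mset f (M i))"
  by (induction I rule: infinite_finite_induct) auto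

lemma sum_single_mset: "(\<Sum>s\<in>A. {#f s#}) = image_mset f (mset_set A)"
  by (induction A rule: infinite_finite_induct) auto

lemma AT_0: "AT fr 0 = {#}"
  by (simp add: AT_def TW_0)

lemma AT_Suc: "AT fr (Suc m) = image_mset (apsnd Node) (CF fr True m)"
proof -
  have "AT fr (Suc m) = (\<Sum>ts\<in>FW m. mset (cuts fr (Node ts)))"
    unfolding AT_def TW_Suc by (subst sum.reindex) (auto simp: inj_on_def)
  also have "\<dots> = (\<Sum>ts\<in>FW m. image_mset (apsnd Node) (mset (map gcat (product_lists (optlist fr True ts)))))"
    by (simp del: cuts.simps add: cuts_eq multiset.map_comp)
  finally show ?thesis by (simp add: CF_def image_mset_sum)
qed

lemma count_apsnd_Node: "count (image_mset (apsnd Node) M) (P, Node rs) = count M (P, rs)"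
  by (induction M) (auto simp: apsnd_def map_prod_def split: prod.splits)

lemma CF_0: "CF fr first 0 = {#([], [])#}"
  by (simp add: CF_def FW_0)

definition OT :: "bool \<Rightarrow> bool \<Rightarrow> nat \<Rightarrow> (forest \<times> forest) multiset" where
  "OT fr first a = (\<Sum>s\<in>TW a. mset (opts fr first s))"

lemma OT_eq: "OT fr first a = (if fr \<and> first then {#} else image_mset (\<lambda>s. ([s], [])) (mset_set (TW a)))
   + image_mset (\<lambda>pr. (fst pr, [snd pr])) (AT fr a)"
proof (cases "fr \<and> first")
  case True then show ?thesis by (simp add: OT_def opts_def AT_def image_mset_sum)
next
  case False
  then have "mset (opts fr first s) = {#([s], [])#} + image_mset (\<lambda>pr. (fst pr, [snd pr])) (mset (cuts fr s))" for s
    by (simp add: opts_def)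
  then have "OT fr first a = (\<Sum>s\<in>TW a. {#([s], [])#}) + (\<Sum>s\<in>TW a. image_mset (\<lambda>pr. (fst pr, [snd pr])) (mset (cuts fr s)))"
    by (simp only: OT_def sum.distrib)
  then show ?thesis using False
    by (simp only: sum_single_mset AT_def image_mset_sum) simp
qed

lemma CF_pos:
  assumes "n > 0"
  shows "CF fr first n = (\<Sum>a\<in>{1..n}. mj (OT fr first a) (CF fr False (n - a)))"
proof -
  have "CF fr first n = (\<Sum>a\<in>{1..n}. \<Sum>s\<in>TW a. \<Sum>ss\<in>FW (n - a).
      mj (mset (opts fr first s)) (mset (map gcat (product_lists (optlist fr False ss)))))"
    unfolding CF_def sum_FW_pos[OF assms] optlist.simps
    by (simp only: mset_pl_Cons optlist_False)
  also have "\<dots> = (\<Sum>a\<in>{1..n}. \<Sum>s\<in>TW a. mj (mset (opts fr first s)) (CF fr False (n - a)))"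
    by (simp only: CF_def mj_sum_right)
  also have "\<dots> = (\<Sum>a\<in>{1..n}. mj (OT fr first a) (CF fr False (n - a)))"
    by (simp only: OT_def mj_sum_left)
  finally show ?thesis .
qed

definition slF :: "bool \<Rightarrow> bool \<Rightarrow> forest \<Rightarrow> nat" where
  "slF fr first R = (if fr then fw R + (if first then 0 else 1) else 2 * fw R + 1)"

definition slT :: "bool \<Rightarrow> ptree \<Rightarrow> nat" where
  "slT fr r = (if fr then tw r - 1 else 2 * tw r - 1)"

lemma slT_Node: "slT fr (Node rs) = slF fr True rs"
  by (simp add: slT_def slF_def fw_def)

lemma sum_delta2:
  fixes c d n :: nat
  shows "(\<Sum>a\<in>{1..n}. (if c = a then A else 0) * (if d = n - a then B else (0::nat))) =
     (if c \<ge> 1 \<and> c + d = n then A * B else 0)"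
proof -
  have "(\<Sum>a\<in>{1..n}. (if c = a then A else 0) * (if d = n - a then B else (0::nat))) =
        (\<Sum>a\<in>{1..n}. if a = c then (if d = n - c then A * B else 0) else 0)"
    by (rule sum.cong) auto
  also have "\<dots> = (if c \<in> {1..n} then (if d = n - c then A * B else 0) else 0)"
    by (cases "d = n - c") (simp_all add: sum.delta[OF finite_atLeastAtMost])
  finally show ?thesis by auto
qed

lemma count_sum_mset: "count (\<Sum>i\<in>I. M i) x = (\<Sum>i\<in>I. count (M i) x)"
  by (induction I rule: infinite_finite_induct) auto

lemma mc_1: "mc 1 l = 1" by (simp add: mc_def)
lemma mc_Suc0: "mc (Suc 0) l = 1" by (simp add: mc_def)
lemma mc_0_Suc: "mc 0 (Suc k) = 0" by (simp add: mc_def)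

lemma main_count:
  "count (CF fr first n) (P, R) = (if fw P + fw R = n then mc (slF fr first R) (length P) else 0)"
proof (induction n arbitrary: first P R rule: less_induct)
  case (less n)
  show ?case
  proof (cases "n = 0")
    case True then show ?thesis by (auto simp: CF_0)
  next
    case False
    have IHC: "count (CF fr False (n - a)) (Q, S) = (if fw Q + fw S = n - a then mc (slF fr False S) (length Q) else 0)"
      if "a \<in> {1..n}" for a Q S
      using less.IH[of "n - a"] that False by auto
    have IHA: "count (AT fr a) (Q, r) = (if fw Q + tw r = a then mc (slT fr r) (length Q) else 0)"
      if a: "a \<in> {1..n}" for a Q r
    proof -
      obtain rs where r: "r = Node rs" by (cases r)
      define m where "m = a - 1"
      have m: "a = Suc m" "m < n" using a by (auto simp: m_def)
      have "count (AT fr a) (Q, r) = count (CF fr True m) (Q, rs)"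
        by (simp add: m AT_Suc r count_apsnd_Node)
      also have "\<dots> = (if fw Q + fw rs = m then mc (slF fr True rs) (length Q) else 0)"
        using less.IH[OF m(2)] by simp
      finally show ?thesis by (simp add: r slT_Node m fw_def)
    qed
    have npos: "0 < n" using False by simp
    define X where "X a = (if fr \<and> first then 0 else case P of [] \<Rightarrow> 0
        | p # P' \<Rightarrow> count (mset_set (TW a)) p * count (CF fr False (n - a)) (P', R))" for a
    define Y where "Y a = (case R of [] \<Rightarrow> 0
        | r # R' \<Rightarrow> \<Sum>i\<le>length P. count (AT fr a) (take i P, r) * count (CF fr False (n - a)) (drop i P, R'))" for a
    have cnt: "count (CF fr first n) (P, R) = (\<Sum>a\<in>{1..n}. X a) + (\<Sum>a\<in>{1..n}. Y a)"
      unfolding CF_pos[OF npos] count_sum_mset sum.distrib[symmetric]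
      by (rule sum.cong[OF refl]) (simp add: OT_eq X_def Y_def cnt_mj1 cnt_mj2)
    have SX: "(\<Sum>a\<in>{1..n}. X a) = (if fr \<and> first then 0 else case P of [] \<Rightarrow> 0
        | p # P' \<Rightarrow> if fw P + fw R = n then mc (slF fr False R) (length P') else 0)"
    proof (cases "fr \<and> first")
      case True then show ?thesis by (simp add: X_def)
    next
      case F: False
      show ?thesis
      proof (cases P)
        case Nil then show ?thesis by (simp add: X_def)
      next
        case (Cons p P')
        have "(\<Sum>a\<in>{1..n}. X a) = (\<Sum>a\<in>{1..n}. (if tw p = a then 1 else 0) *
              (if fw P' + fw R = n - a then mc (slF fr False R) (length P') else 0))"
          by (rule sum.cong[OF refl]) (simp add: X_def F Cons IHC finite_TW[unfolded TW_def] TW_def count_mset_set')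
        also have "\<dots> = (if fw P + fw R = n then mc (slF fr False R) (length P') else 0)"
          by (simp only: sum_delta2) (use tw_pos[of p] in \<open>auto simp: Cons\<close>)
        finally show ?thesis using F Cons by auto
      qed
    qed
    have SY: "(\<Sum>a\<in>{1..n}. Y a) = (case R of [] \<Rightarrow> 0
        | r # R' \<Rightarrow> if fw P + fw R = n then mc (slT fr r + slF fr False R') (length P) else 0)"
    proof (cases R)
      case Nil then show ?thesis by (simp add: Y_def)
    next
      case (Cons r R')
      have "(\<Sum>a\<in>{1..n}. Y a) = (\<Sum>i\<le>length P. \<Sum>a\<in>{1..n}.
          count (AT fr a) (take i P, r) * count (CF fr False (n - a)) (drop i P, R'))"
        unfolding Y_def Cons by (simp, rule sum.swap)
      also have "\<dots> = (\<Sum>i\<le>length P. \<Sum>a\<in>{1..n}.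
          (if fw (take i P) + tw r = a then mc (slT fr r) i else 0) *
          (if fw (drop i P) + fw R' = n - a then mc (slF fr False R') (length P - i) else 0))"
        by (intro sum.cong refl) (simp add: IHA IHC)
      also have "\<dots> = (\<Sum>i\<le>length P. if fw P + fw R = n then mc (slT fr r) i * mc (slF fr False R') (length P - i) else 0)"
      proof (intro sum.cong refl)
        fix i
        have "fw (take i P) + fw (drop i P) = fw P"
          by (metis append_take_drop_id fw_append)
        then show "(\<Sum>a\<in>{1..n}.
          (if fw (take i P) + tw r = a then mc (slT fr r) i else 0) *
          (if fw (drop i P) + fw R' = n - a then mc (slF fr False R') (length P - i) else 0)) =
          (if fw P + fw R = n then mc (slT fr r) i * mc (slF fr False R') (length P - i) else 0)"
          by (simp only: sum_delta2) (use tw_pos[of r] in \<open>auto simp: Cons\<close>)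
      qed
      also have "\<dots> = (if fw P + fw R = n then mc (slT fr r + slF fr False R') (length P) else 0)"
        by (simp add: mc_vandermonde)
      finally show ?thesis using Cons by simp
    qed
    show ?thesis
    proof (cases R)
      case Nil
      show ?thesis
      proof (cases "fw P = n")
        case True
        then obtain p P' where P: "P = p # P'" using False by (cases P) auto
        show ?thesis using True
          unfolding cnt SX SY by (auto simp: Nil P slF_def mc_1 mc_Suc0 mc_0_Suc)
      next
        case F2: False
        then show ?thesis unfolding cnt SX SY by (auto simp: Nil split: list.split)
      qed
    next
      case (Cons r R')
      have twr: "tw r \<ge> 1" by (rule tw_pos)
      show ?thesis
      proof (cases "fw P + fw R = n")
        case F2: False
        then show ?thesis unfolding cnt SX SY by (auto simp: Cons split: list.split)
      next
        case True
        show ?thesis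
        proof (cases P)
          case Nil
          then show ?thesis using True unfolding cnt SX SY by (simp add: Cons)
        next
          case (Cons p P')
          have lP: "length P \<ge> 1" using Cons by simp
          show ?thesis
          proof (cases fr)
            case False
            have "slT fr r + slF fr False R' = slF fr first R - 1" "slF fr first R \<ge> 1"
              using False twr by (auto simp: slT_def slF_def \<open>R = r # R'\<close>)
            moreover have "slF fr False R = slF fr first R" using False by (simp add: slF_def)
            ultimately show ?thesis using True False lP mc_pascal[of "slF fr first R" "length P"]
              unfolding cnt SX SY by (simp add: \<open>R = r # R'\<close> Cons add.commute)
          next
            case True2: True
            show ?thesis
            proof (cases first)
              case True
              have "slT fr r + slF fr False R' = slF fr first R"
                using True True2 twr by (auto simp: slT_def slF_def \<open>R = r # R'\<close>)
              then show ?thesis using \<open>fw P + fw R = n\<close> True True2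
                unfolding cnt SX SY by (simp add: \<open>R = r # R'\<close>)
            next
              case False
              have "slT fr r + slF fr False R' = slF fr first R - 1" "slF fr first R \<ge> 1"
                "slF fr False R = slF fr first R"
                using False True2 twr by (auto simp: slT_def slF_def \<open>R = r # R'\<close>)
              then show ?thesis using \<open>fw P + fw R = n\<close> False True2 lP mc_pascal[of "slF fr first R" "length P"]
                unfolding cnt SX SY by (simp add: \<open>R = r # R'\<close> Cons add.commute)
            qed
          qed
        qed
      qed
    qed
  qed
qed

lemma sum_fun_app: "(\<Sum>i\<in>I. f i) x = (\<Sum>i\<in>I. f i x)"
  by (induction I rule: infinite_finite_induct) auto

lemma vv_apply: "vv a F = (if map tw F = [a] then 1 else 0)"
  by (auto simp: vv_def)

lemma hprod_vv: "hprod (map vv as) F = (if map tw F = as then 1 else 0)"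
proof (induction as arbitrary: F)
  case Nil then show ?case by (simp add: hprod_def basis_def)
next
  case (Cons a as)
  have "hprod (map vv (a # as)) F = (\<Sum>i\<le>length F. vv a (take i F) * hprod (map vv as) (drop i F))"
    by (simp add: hprod_def hmult_def)
  also have "\<dots> = (\<Sum>i\<le>length F. if i = 1 then (if map tw F = a # as then 1 else 0) else 0)"
  proof (rule sum.cong[OF refl])
    fix i assume "i \<in> {..length F}"
    then show "vv a (take i F) * hprod (map vv as) (drop i F) = (if i = 1 then (if map tw F = a # as then 1 else 0) else 0)"
      unfolding Cons.IH vv_apply
      by (cases F; cases i) (auto simp: take_map[symmetric] drop_map[symmetric])
  qed
  also have "\<dots> = (if map tw F = a # as then 1 else 0)"
    by (cases F) (auto simp: Suc_le_eq)
  finally show ?case .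
qed

lemma compsum_eq: "compsum k l F = (if length F = l \<and> fw F = k then 1 else 0)"
proof -
  define S where "S = {as. length as = l \<and> sum_list as = k \<and> (\<forall>a\<in>set as. 0 < a)}"
  have fin: "finite S"
  proof (rule finite_subset)
    show "S \<subseteq> {xs. set xs \<subseteq> {0..k} \<and> length xs = l}"
      by (auto simp: S_def member_le_sum_list)
    show "finite {xs. set xs \<subseteq> {0..k} \<and> length xs = l}"
      by (rule finite_lists_length_eq) simp
  qed
  have "compsum k l F = (\<Sum>as\<in>S. if as = map tw F then 1 else 0)"
    unfolding compsum_def S_def[symmetric] sum_fun_app hprod_vv by (rule sum.cong) auto
  also have "\<dots> = (if map tw F \<in> S then 1 else 0)"
    using fin by (simp add: sum.delta')
  also have "(map tw F \<in> S) \<longleftrightarrow> (length F = l \<and> fw F = k)"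
    using tw_gt0 by (auto simp: S_def fw_def)
  finally show ?thesis .
qed

lemma rhs_eval:
  "(\<Sum>k\<in>{1..n-1}. \<Sum>l\<in>{1..k}. smult (of_nat (f k l)) (tens (compsum k l) (y (n - k)))) (P, R) =
     (if 1 \<le> length P \<and> fw P \<le> n - 1 then of_nat (f (fw P) (length P)) * y (n - fw P) R else 0)"
proof -
  have "(\<Sum>k\<in>{1..n-1}. \<Sum>l\<in>{1..k}. smult (of_nat (f k l)) (tens (compsum k l) (y (n - k)))) (P, R) =
    (\<Sum>k\<in>{1..n-1}. \<Sum>l\<in>{1..k}. if l = length P then (if fw P = k then of_nat (f k (length P)) * y (n - k) R else 0) else 0)"
    unfolding sum_fun_app smult_def tens_def compsum_eq
    by (intro sum.cong refl) auto
  also have "\<dots> = (\<Sum>k\<in>{1..n-1}. if k = fw P then (if 1 \<le> length P \<and> length P \<le> fw P then of_nat (f (fw P) (length P)) * y (n - fw P) R else 0) else 0)"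
  proof (rule sum.cong[OF refl])
    fix k
    have "(\<Sum>l\<in>{1..k}. if l = length P then (if fw P = k then of_nat (f k (length P)) * y (n - k) R else 0) else 0)
       = (if length P \<in> {1..k} then (if fw P = k then of_nat (f k (length P)) * y (n - k) R else 0) else 0)"
      by (rule sum.delta) simp
    then show "(\<Sum>l\<in>{1..k}. if l = length P then (if fw P = k then of_nat (f k (length P)) * y (n - k) R else 0) else 0) =
      (if k = fw P then (if 1 \<le> length P \<and> length P \<le> fw P then of_nat (f (fw P) (length P)) * y (n - fw P) R else 0) else 0)"
      by auto
  qed
  also have "\<dots> = (if 1 \<le> length P \<and> fw P \<le> n - 1 then of_nat (f (fw P) (length P)) * y (n - fw P) R else 0)"
    using length_le_fw[of P] by (auto simp: sum.delta')
  finally show ?thesis .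
qed

lemma tcop_opts: "tcop fr = opts fr False"
  by (rule ext) (simp add: tcop_def opts_def)

lemma fcop_single: "fcop fr [t] = tcop fr t"
  by (simp add: fcop_def comp_def)

lemma fcop_CF: "fcop fr F = map gcat (product_lists (optlist fr False F))"
  by (simp add: fcop_def optlist_False tcop_opts gcat_def)

lemma cop_vv: "cop fr (vv n) (P, R) = of_nat (count (OT fr False n) (P, R))"
proof -
  have S: "{F. vv n F \<noteq> 0} = (\<lambda>t. [t]) ` TW n"
    by (auto simp: vv_def TW_def)
  have "cop fr (vv n) (P, R) = (\<Sum>t\<in>TW n. of_nat (count_list (fcop fr [t]) (P, R)))"
    unfolding cop_def S by (subst sum.reindex) (auto simp: inj_on_def vv_def TW_def)
  also have "\<dots> = of_nat (count (OT fr False n) (P, R))"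
    by (simp add: fcop_single tcop_opts OT_def count_sum_mset count_mset)
  finally show ?thesis .
qed

lemma cop_uu: "cop fr (uu n) (P, R) = of_nat (count (CF fr False n) (P, R))"
proof -
  have S: "{F. uu n F \<noteq> 0} = FW n"
    by (auto simp: uu_def FW_def)
  show ?thesis
    unfolding cop_def S CF_def count_sum_mset of_nat_sum
    by (intro sum.cong refl) (simp add: uu_def FW_def fcop_CF flip: count_mset)
qed

lemma AT_count: "count (AT fr n) (P, r) = (if fw P + tw r = n then mc (slT fr r) (length P) else 0)"
proof (cases n)
  case 0 then show ?thesis using tw_gt0[of r] by (simp add: AT_0)
next
  case (Suc m)
  obtain rs where r: "r = Node rs" by (cases r)
  show ?thesis unfolding Suc AT_Suc r count_apsnd_Node main_count
    by (simp add: slT_Node fw_def)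
qed

lemma cnt_img_pr: "count (image_mset (\<lambda>pr. (fst pr, [snd pr])) A) (P, R) =
   (case R of [r] \<Rightarrow> count A (P, r) | _ \<Rightarrow> 0)"
  by (induction A) (auto split: list.split)

lemma cnt_img_s: "count (image_mset (\<lambda>s. ([s], [])) M) (P, R) =
   (if R = [] then (case P of [p] \<Rightarrow> count M p | _ \<Rightarrow> 0) else 0)"
  by (induction M) (auto split: list.split)

lemma vv_cases: "vv n [] = 0" "vv n [t] = (if tw t = n then 1 else 0)" "vv n (a # b # c) = 0"
  by (auto simp: vv_def)

lemma basis_Nil: "basis [] F = (if F = [] then 1 else 0)"
  by (simp add: basis_def)

lemma vv_gen:
  assumes n: "1 \<le> n"
    and f: "\<And>k l. 1 \<le> l \<Longrightarrow> l \<le> k \<Longrightarrow> k \<le> n - 1 \<Longrightarrow>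
              f k l = mc (if fr then (n - k) - 1 else 2 * (n - k) - 1) l"
  shows "rcop fr (vv n) = (\<Sum>k\<in>{1..n-1}. \<Sum>l\<in>{1..k}.
              smult (of_nat (f k l)) (tens (compsum k l) (vv (n - k))))"
proof (rule ext)
  fix p :: "forest \<times> forest"
  obtain P R where p: "p = (P, R)" by (cases p)
  have L0: "rcop fr (vv n) (P, R) = of_nat (count (OT fr False n) (P, R)) - vv n P * basis [] R - basis [] P * vv n R"
    by (simp add: rcop_def tens_def cop_vv)
  have OTc: "count (OT fr False n) (P, R) =
      (if R = [] then (case P of [p] \<Rightarrow> if tw p = n then 1 else 0 | _ \<Rightarrow> 0) else 0) +
      (case R of [r] \<Rightarrow> count (AT fr n) (P, r) | _ \<Rightarrow> 0)"
    by (simp add: OT_eq cnt_img_pr cnt_img_s finite_TW[unfolded TW_def] TW_def count_mset_set' split: list.split)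
  have R: "(\<Sum>k\<in>{1..n-1}. \<Sum>l\<in>{1..k}. smult (of_nat (f k l)) (tens (compsum k l) (vv (n - k)))) (P, R) =
     (if 1 \<le> length P \<and> fw P \<le> n - 1 then of_nat (f (fw P) (length P)) * vv (n - fw P) R else 0)"
    by (rule rhs_eval)
  have "rcop fr (vv n) (P, R) = (if 1 \<le> length P \<and> fw P \<le> n - 1 then of_nat (f (fw P) (length P)) * vv (n - fw P) R else 0)"
  proof (cases R)
    case Nil
    then show ?thesis unfolding L0 OTc
      by (cases P rule: remdups_adj.cases) (auto simp: vv_cases basis_Nil)
  next
    case (Cons r R')
    show ?thesis
    proof (cases R')
      case (Cons a b)
      then show ?thesis unfolding L0 OTc using \<open>R = r # R'\<close> by (simp add: vv_cases basis_Nil)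
    next
      case Nil
      have Rr: "R = [r]" using Nil \<open>R = r # R'\<close> by simp
      show ?thesis
      proof (cases "P = []")
        case True
        then show ?thesis unfolding L0 OTc unfolding Rr by (simp add: vv_cases basis_Nil AT_count)
      next
        case False
        have lP: "1 \<le> length P" "length P \<le> fw P" using False length_le_fw[of P] by (auto simp: Suc_le_eq)
        have twr: "tw r \<ge> 1" by (rule tw_pos)
        show ?thesis
        proof (cases "fw P + tw r = n")
          case True
          then have "fw P \<le> n - 1" using twr by simp
          then have "f (fw P) (length P) = mc (slT fr r) (length P)"
          proof -
            have "tw r = n - fw P" using True by simp
            then show ?thesis using f[OF lP \<open>fw P \<le> n - 1\<close>] by (simp add: slT_def)
          qed
          then show ?thesis unfolding L0 OTc unfolding Rr using True lP \<open>fw P \<le> n - 1\<close> False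
            by (simp add: vv_cases basis_Nil AT_count)
        next
          case F2: False
          then show ?thesis unfolding L0 OTc unfolding Rr using False
            by (auto simp: vv_cases basis_Nil AT_count)
        qed
      qed
    qed
  qed
  then show "rcop fr (vv n) p = (\<Sum>k\<in>{1..n-1}. \<Sum>l\<in>{1..k}.
              smult (of_nat (f k l)) (tens (compsum k l) (vv (n - k)))) p"
    using R p by simp
qed

lemma uu_apply: "uu n F = (if fw F = n then 1 else 0)"
  by (simp add: uu_def)

lemma uu_gen:
  assumes n: "1 \<le> n"
    and f: "\<And>k l. 1 \<le> l \<Longrightarrow> l \<le> k \<Longrightarrow> k \<le> n - 1 \<Longrightarrow>
              f k l = mc (if fr then (n - k) + 1 else 2 * (n - k) + 1) l"
  shows "rcop fr (uu n) = (\<Sum>k\<in>{1..n-1}. \<Sum>l\<in>{1..k}.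
              smult (of_nat (f k l)) (tens (compsum k l) (uu (n - k))))"
proof (rule ext)
  fix p :: "forest \<times> forest"
  obtain P R where p: "p = (P, R)" by (cases p)
  have L0: "rcop fr (uu n) (P, R) = of_nat (count (CF fr False n) (P, R)) - uu n P * basis [] R - basis [] P * uu n R"
    by (simp add: rcop_def tens_def cop_uu)
  have R: "(\<Sum>k\<in>{1..n-1}. \<Sum>l\<in>{1..k}. smult (of_nat (f k l)) (tens (compsum k l) (uu (n - k)))) (P, R) =
     (if 1 \<le> length P \<and> fw P \<le> n - 1 then of_nat (f (fw P) (length P)) * uu (n - fw P) R else 0)"
    by (rule rhs_eval)
  have "rcop fr (uu n) (P, R) = (if 1 \<le> length P \<and> fw P \<le> n - 1 then of_nat (f (fw P) (length P)) * uu (n - fw P) R else 0)"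
  proof (cases "R = []")
    case True
    then show ?thesis unfolding L0 main_count using n
      by (auto simp: uu_apply basis_Nil slF_def mc_Suc0)
  next
    case RN: False
    have fR: "fw R \<ge> 1" using RN fw_eq0[of R] by (metis One_nat_def Suc_leI neq0_conv)
    show ?thesis
    proof (cases "P = []")
      case True
      then show ?thesis unfolding L0 main_count using RN by (simp add: uu_apply basis_Nil)
    next
      case False
      have lP: "1 \<le> length P" "length P \<le> fw P" using False length_le_fw[of P] by (auto simp: Suc_le_eq)
      show ?thesis
      proof (cases "fw P + fw R = n")
        case True
        then have le: "fw P \<le> n - 1" using fR by simp
        have "f (fw P) (length P) = mc (slF fr False R) (length P)"
        proof -
          have "fw R = n - fw P" using True by simp
          then show ?thesis using f[OF lP le] by (simp add: slF_def)
        qed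
        then show ?thesis unfolding L0 main_count using True lP le False RN
          by (simp add: uu_apply basis_Nil)
      next
        case F2: False
        then show ?thesis unfolding L0 main_count using False RN
          by (auto simp: uu_apply basis_Nil)
      qed
    qed
  qed
  then show "rcop fr (uu n) p = (\<Sum>k\<in>{1..n-1}. \<Sum>l\<in>{1..k}.
              smult (of_nat (f k l)) (tens (compsum k l) (uu (n - k)))) p"
    using R p by simp
qed

theorem mainTheorem9:
  fixes n :: nat
  assumes "1 \<le> n"
  shows "rcop False (vv n) =
           (\<Sum>k\<in>{1..n-1}. \<Sum>l\<in>{1..k}.
              smult (of_nat ((2*n - 2*k + l - 2) choose l)) (tens (compsum k l) (vv (n - k))))
       \<and> rcop True (vv n) =
           (\<Sum>k\<in>{1..n-1}. \<Sum>l\<in>{1..k}.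
              smult (of_nat ((n - k + l - 2) choose l)) (tens (compsum k l) (vv (n - k))))
       \<and> rcop False (uu n) =
           (\<Sum>k\<in>{1..n-1}. \<Sum>l\<in>{1..k}.
              smult (of_nat ((2*n - 2*k + l) choose l)) (tens (compsum k l) (uu (n - k))))
       \<and> rcop True (uu n) =
           (\<Sum>k\<in>{1..n-1}. \<Sum>l\<in>{1..k}.
              smult (of_nat ((n - k + l) choose l)) (tens (compsum k l) (uu (n - k))))"
proof (intro conjI)
  show "rcop False (vv n) =
           (\<Sum>k\<in>{1..n-1}. \<Sum>l\<in>{1..k}.
              smult (of_nat ((2*n - 2*k + l - 2) choose l)) (tens (compsum k l) (vv (n - k))))"
  proof (rule vv_gen[OF assms])
    fix k l :: nat assume "1 \<le> l" "l \<le> k" "k \<le> n - 1"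
    then have "2*n - 2*k + l - 2 = (2 * (n - k) - 1) + l - 1" by linarith
    then show "(2*n - 2*k + l - 2) choose l = mc (if False then (n - k) - 1 else 2 * (n - k) - 1) l" by (simp add: mc_def)
  qed
  show "rcop True (vv n) =
           (\<Sum>k\<in>{1..n-1}. \<Sum>l\<in>{1..k}.
              smult (of_nat ((n - k + l - 2) choose l)) (tens (compsum k l) (vv (n - k))))"
  proof (rule vv_gen[OF assms])
    fix k l :: nat assume "1 \<le> l" "l \<le> k" "k \<le> n - 1"
    then have "n - k + l - 2 = ((n - k) - 1) + l - 1" by linarith
    then show "(n - k + l - 2) choose l = mc (if True then (n - k) - 1 else 2 * (n - k) - 1) l" by (simp add: mc_def)
  qed
  show "rcop False (uu n) =
           (\<Sum>k\<in>{1..n-1}. \<Sum>l\<in>{1..k}.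
              smult (of_nat ((2*n - 2*k + l) choose l)) (tens (compsum k l) (uu (n - k))))"
  proof (rule uu_gen[OF assms])
    fix k l :: nat assume "1 \<le> l" "l \<le> k" "k \<le> n - 1"
    then have "2*n - 2*k + l = (2 * (n - k) + 1) + l - 1" by linarith
    then show "(2*n - 2*k + l) choose l = mc (if False then (n - k) + 1 else 2 * (n - k) + 1) l" by (simp add: mc_def)
  qed
  show "rcop True (uu n) =
           (\<Sum>k\<in>{1..n-1}. \<Sum>l\<in>{1..k}.
              smult (of_nat ((n - k + l) choose l)) (tens (compsum k l) (uu (n - k))))"
  proof (rule uu_gen[OF assms])
    fix k l :: nat assume "1 \<le> l" "l \<le> k" "k \<le> n - 1"
    then have "n - k + l = ((n - k) + 1) + l - 1" by linarith
    then show "(n - k + l) choose l = mc (if True then (n - k) + 1 else 2 * (n - k) + 1) l" by (simp add: mc_def)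
  qed
qed

end
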